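(* For every $q\ge2$ and integers $n>h\ge1$, $$M_q(n,h)\ge\frac{\binom{n+q-1}{q-1}}{\phi(h,q)},\qquad M_q(n,h)\le\frac{\binom{n+q-1}{q-1}}{\beta(h,q)}+\sum_{j=1}^{q\lceil h/2\rceil}\binom{n+q-1-j}{q-2}.$$
   Context: $\triangle_n^{q-1}=\{\mathbf x\in\mathbb Z^q:x_i\ge0,\sum_ix_i=n\}$ (multisets of size $n$ over $\{0,\dots,q-1\}$), with $d_1(\mathbf x,\mathbf y)=\frac12\sum_i|x_i-y_i|$. $M_q(n,h)$ is the largest cardinality of a subset of $\triangle_n^{q-1}$ in which distinct elements are at $d_1$-distance $>h$ (equivalently, of a multiset code correcting $h$ deletions). $\beta(h,q)=\sum_{j\ge0}\binom{q-1}{j}\binom{\lceil h/2\rceil}{j}\binom{\lfloor h/2\rfloor+q-1-j}{q-1-j}$. $\phi(h,q)$ is the smallest order of a finite Abelian group containing a $B_h$ set of cardinality $q$, where a set $\{b_0,\dots,b_{q-1}\}$ in an Abelian group is a $B_h$ set if the sums $b_{i_1}+\dots+b_{i_h}$, $0\le i_1\le\dots\le i_h\le q-1$, are pairwise different. Convention: $\binom ab=0$ for integers $a<b$. *)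

theory Defs
  imports "HOL-Algebra.Algebra"
begin

text \<open>The discrete simplex: multisets of size n over {0,...,q-1}, represented as
  count vectors x with x i = 0 for i >= q and sum of x i over i < q equal to n.\<close>
definition simplex :: "nat \<Rightarrow> nat \<Rightarrow> (nat \<Rightarrow> nat) set" where
  "simplex q n = {x. (\<forall>i\<ge>q. x i = 0) \<and> (\<Sum>i<q. x i) = n}"

definition d1 :: "nat \<Rightarrow> (nat \<Rightarrow> nat) \<Rightarrow> (nat \<Rightarrow> nat) \<Rightarrow> real" where
  "d1 q x y = (\<Sum>i<q. \<bar>real (x i) - real (y i)\<bar>) / 2"

definition M :: "nat \<Rightarrow> nat \<Rightarrow> nat \<Rightarrow> nat" where
  "M q n h = Max {card C | C. C \<subseteq> simplex q n \<and>
      (\<forall>x\<in>C. \<forall>y\<in>C. x \<noteq> y \<longrightarrow> d1 q x y > real h)}"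

definition ibinom :: "int \<Rightarrow> nat \<Rightarrow> nat" where
  "ibinom a b = (if a < int b then 0 else nat a choose b)"

definition beta :: "nat \<Rightarrow> nat \<Rightarrow> nat" where
  "beta h q = (\<Sum>j\<le>q - 1. ((q - 1) choose j) * (((h + 1) div 2) choose j)
                 * ((h div 2 + (q - 1 - j)) choose (q - 1 - j)))"

text \<open>b_0,...,b_{q-1} is a B_h set of cardinality q in the abelian group G:
  distinct elements of the carrier such that sums of h of them (with repetition,
  i.e. indexed by multisets of size h over {0..q-1}) are pairwise different.
  The group is written multiplicatively, as in HOL-Algebra.\<close>
definition Bh_set :: "('a, 'b) monoid_scheme \<Rightarrow> nat \<Rightarrow> nat \<Rightarrow> (nat \<Rightarrow> 'a) \<Rightarrow> bool" where
  "Bh_set G h q b \<longleftrightarrow> (\<forall>i<q. b i \<in> carrier G) \<and> inj_on b {..<q} \<and>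
     inj_on (\<lambda>x. finprod G (\<lambda>i. b i [^]\<^bsub>G\<^esub> x i) {..<q}) (simplex q h)"

text \<open>Every finite group is isomorphic to one whose carrier consists of natural numbers,
  so quantifying over groups with carrier type nat loses no generality.\<close>
definition phi :: "nat \<Rightarrow> nat \<Rightarrow> nat" where
  "phi h q = (LEAST m. \<exists>(G::nat monoid) b. comm_group G \<and> finite (carrier G) \<and>
      card (carrier G) = m \<and> Bh_set G h q b)"

end

theory Submission
  imports Defs
begin


definition Lset :: "nat set \<Rightarrow> nat \<Rightarrow> (nat \<Rightarrow> nat) set" where
  "Lset J m = {f. (\<forall>i. i \<notin> J \<longrightarrow> f i = 0) \<and> sum f J \<le> m}"

lemma Lset_insert:
  assumes "a \<notin> J" "finite J"
  shows "Lset (insert a J) m = (\<lambda>(c,g). g(a:=c)) ` (SIGMA c:{..m}. Lset J (m - c))"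
proof (intro Set.set_eqI iffI)
  fix f assume f: "f \<in> Lset (insert a J) m"
  have s: "sum f (insert a J) = f a + sum f J" using assms by simp
  let ?g = "f(a:=0)"
  have "sum ?g J = sum f J" using assms by (intro sum.cong) auto
  hence "(f a, ?g) \<in> (SIGMA c:{..m}. Lset J (m - c))" using f s by (auto simp: Lset_def)
  moreover have "f = (\<lambda>(c,g). g(a:=c)) (f a, ?g)" by auto
  ultimately show "f \<in> (\<lambda>(c,g). g(a:=c)) ` (SIGMA c:{..m}. Lset J (m - c))" by blast
next
  fix f assume "f \<in> (\<lambda>(c,g). g(a:=c)) ` (SIGMA c:{..m}. Lset J (m - c))"
  then obtain c g where f: "f = g(a:=c)" "c \<le> m" "g \<in> Lset J (m - c)" by auto
  have "sum f J = sum g J" using assms f by (intro sum.cong) auto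
  thus "f \<in> Lset (insert a J) m" using f assms by (auto simp: Lset_def)
qed

lemma card_Lset: "finite J \<Longrightarrow> card (Lset J m) = (m + card J) choose card J"
proof (induction J arbitrary: m rule: finite_induct)
  case empty
  have "Lset {} m = {\<lambda>_. 0}" by (auto simp: Lset_def)
  thus ?case by simp
next
  case (insert a J)
  let ?k = "card J"
  have fin: "finite (Lset J m')" for m'
    using insert.IH[of m'] by (metis card.infinite binomial_eq_0_iff not_le le_add2 )
  have inj: "inj_on (\<lambda>(c,g). g(a:=c)) (SIGMA c:{..m}. Lset J (m - c))"
  proof (rule inj_onI, clarsimp)
    fix c g c' g' assume "g \<in> Lset J (m - c)" "g' \<in> Lset J (m - c')" "g(a := c) = g'(a := c')"
    moreover have "g a = 0" "g' a = 0" using calculation insert.hyps by (auto simp: Lset_def)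
    ultimately show "c = c' \<and> g = g'" by (metis fun_upd_idem_iff fun_upd_upd fun_upd_same)
  qed
  have "card (Lset (insert a J) m) = card (SIGMA c:{..m}. Lset J (m - c))"
    using Lset_insert[OF insert.hyps(2,1)] inj by (simp add: card_image)
  also have "\<dots> = (\<Sum>c\<le>m. (m - c + ?k) choose ?k)"
    using fin insert.IH by (simp add: card_SigmaI)
  also have "\<dots> = (\<Sum>c\<le>m. (?k + c) choose c)"
  proof -
    have "(\<Sum>c\<le>m. (m - c + ?k) choose ?k) = (\<Sum>c\<le>m. (m - c + ?k) choose (m - c))"
      by (intro sum.cong) (auto simp: binomial_symmetric[of ?k] )
    also have "\<dots> = (\<Sum>c\<le>m. (?k + c) choose c)"
      by (rule sum.reindex_bij_witness[of _ "\<lambda>c. m - c" "\<lambda>c. m - c"]) (auto simp: add.commute)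
    finally show ?thesis .
  qed
  also have "\<dots> = Suc (?k + m) choose m" by (rule sum_choose_lower)
  also have "\<dots> = (m + card (insert a J)) choose card (insert a J)"
    using insert.hyps by (simp add: binomial_symmetric[of m] add.commute)
  finally show ?case .
qed


definition Pset :: "nat set \<Rightarrow> nat \<Rightarrow> (nat \<Rightarrow> nat) set" where
  "Pset J r = {f. (\<forall>i. i \<notin> J \<longrightarrow> f i = 0) \<and> (\<forall>i\<in>J. f i > 0) \<and> sum f J \<le> r}"

lemma card_Pset: assumes "finite J" shows "card (Pset J r) = r choose card J"
proof (cases "card J \<le> r")
  case True
  let ?e = "\<lambda>g i. if i \<in> J then g i + 1 else (0::nat)"
  have img: "Pset J r = ?e ` Lset J (r - card J)"
  proof (intro Set.set_eqI iffI)
    fix f assume f: "f \<in> Pset J r"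
    let ?g = "\<lambda>i. f i - 1"
    have "sum f J = sum (\<lambda>i. ?g i + 1) J" using f by (intro sum.cong) (auto simp: Pset_def)
    also have "\<dots> = sum ?g J + card J" by (simp only: sum.distrib) simp
    finally have m: "?g \<in> Lset J (r - card J)" using f by (auto simp: Pset_def Lset_def)
    have "f = ?e ?g" using f by (auto simp: Pset_def fun_eq_iff)
    from this m show "f \<in> ?e ` Lset J (r - card J)" by (rule image_eqI[where x="\<lambda>i. f i - 1"])
  next
    fix f assume "f \<in> ?e ` Lset J (r - card J)"
    then obtain g where g: "g \<in> Lset J (r - card J)" "f = ?e g" by auto
    have "sum f J = sum (\<lambda>i. g i + 1) J" using g by (intro sum.cong) auto
    also have "\<dots> = sum g J + card J" by (simp only: sum.distrib) simp
    finally show "f \<in> Pset J r" using g True by (auto simp: Pset_def Lset_def)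
  qed
  have inj: "inj_on ?e (Lset J (r - card J))"
  proof (rule inj_onI)
    fix g g' assume "g \<in> Lset J (r - card J)" "g' \<in> Lset J (r - card J)" "?e g = ?e g'"
    hence "g i = g' i" for i
      by (cases "i \<in> J") (auto simp: Lset_def dest: fun_cong[where x=i])
    thus "g = g'" by auto
  qed
  have "card (Pset J r) = card (Lset J (r - card J))" using img inj by (simp add: card_image)
  also have "\<dots> = r choose card J" using card_Lset[OF assms] True by simp
  finally show ?thesis .
next
  case False
  have "Pset J r = {}"
  proof (rule ccontr)
    assume "Pset J r \<noteq> {}"
    then obtain f where f: "f \<in> Pset J r" by auto
    have "card J = sum (\<lambda>_. 1::nat) J" by simp
    also have "\<dots> \<le> sum f J" using f by (intro sum_mono) (auto simp: Pset_def Suc_le_eq)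
    also have "\<dots> \<le> r" using f by (auto simp: Pset_def)
    finally show False using False by simp
  qed
  thus ?thesis using False by simp
qed


definition mk :: "nat set \<Rightarrow> (nat \<Rightarrow> nat) \<times> (nat \<Rightarrow> nat) \<Rightarrow> nat \<Rightarrow> int" where
  "mk J p = (\<lambda>i. if i \<in> J then - int (fst p i) else int (snd p i))"

definition Tset :: "nat set \<Rightarrow> nat \<Rightarrow> nat \<Rightarrow> (nat \<Rightarrow> int) set" where
  "Tset K r s = (\<Union>J\<in>Pow K. mk J ` (Pset J r \<times> Lset (K - J) s))"

lemma finite_Lset: "finite J \<Longrightarrow> finite (Lset J m)"
  using card_Lset[of J m] by (metis card.infinite binomial_eq_0_iff not_le le_add2)

lemma finite_Pset: "finite J \<Longrightarrow> finite (Pset J m)"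
  by (rule finite_subset[OF _ finite_Lset[of J m]]) (auto simp: Pset_def Lset_def)

lemma mk_neg_set:
  assumes "J \<subseteq> K" "p \<in> Pset J r \<times> Lset (K - J) s"
  shows "{i. mk J p i < 0} = J"
  using assms by (auto simp: mk_def Pset_def Lset_def)

lemma inj_mk:
  assumes "J \<subseteq> K"
  shows "inj_on (mk J) (Pset J r \<times> Lset (K - J) s)"
proof (rule inj_onI)
  fix p p' assume p: "p \<in> Pset J r \<times> Lset (K - J) s" and p': "p' \<in> Pset J r \<times> Lset (K - J) s"
    and e: "mk J p = mk J p'"
  have "fst p i = fst p' i \<and> snd p i = snd p' i" for i
  proof (cases "i \<in> J")
    case True
    hence "snd p i = 0" "snd p' i = 0" using p p' by (auto simp: Lset_def)
    moreover have "- int (fst p i) = - int (fst p' i)" using e True unfolding mk_def fun_eq_iff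
      by metis
    ultimately show ?thesis by simp
  next
    case False
    hence "fst p i = 0" "fst p' i = 0" using p p' by (auto simp: Pset_def)
    moreover have "int (snd p i) = int (snd p' i)" using e False unfolding mk_def fun_eq_iff
      by metis
    ultimately show ?thesis by simp
  qed
  thus "p = p'" by (simp add: prod_eq_iff fun_eq_iff)
qed

lemma card_Tset:
  assumes "finite K"
  shows "card (Tset K r s) = (\<Sum>J\<in>Pow K. (r choose card J) * ((s + card (K - J)) choose card (K - J)))"
proof -
  have "card (Tset K r s) = (\<Sum>J\<in>Pow K. card (mk J ` (Pset J r \<times> Lset (K - J) s)))"
    unfolding Tset_def
  proof (rule card_UN_disjoint)
    show "finite (Pow K)" using assms by simp
    show "\<forall>J\<in>Pow K. finite (mk J ` (Pset J r \<times> Lset (K - J) s))"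
      using assms by (auto intro!: finite_imageI finite_cartesian_product finite_Pset finite_Lset
          intro: finite_subset)
    show "\<forall>J\<in>Pow K. \<forall>J'\<in>Pow K. J \<noteq> J' \<longrightarrow>
        mk J ` (Pset J r \<times> Lset (K - J) s) \<inter> mk J' ` (Pset J' r \<times> Lset (K - J') s) = {}"
    proof (intro ballI impI)
      fix J J' assume J: "J \<in> Pow K" and J': "J' \<in> Pow K" and ne: "J \<noteq> J'"
      show "mk J ` (Pset J r \<times> Lset (K - J) s) \<inter> mk J' ` (Pset J' r \<times> Lset (K - J') s) = {}"
      proof (rule ccontr)
        assume "\<not> ?thesis"
        then obtain p p' where p: "p \<in> Pset J r \<times> Lset (K - J) s" and p': "p' \<in> Pset J' r \<times> Lset (K - J') s"
          and e: "mk J p = mk J' p'" by blast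
        have "J = J'" using mk_neg_set[of J K p r s] mk_neg_set[of J' K p' r s] J J' p p' e by auto
        thus False using ne by simp
      qed
    qed
  qed
  also have "\<dots> = (\<Sum>J\<in>Pow K. (r choose card J) * ((s + card (K - J)) choose card (K - J)))"
  proof (rule sum.cong[OF refl])
    fix J assume J: "J \<in> Pow K"
    hence fJ: "finite J" using assms finite_subset by auto
    have "card (mk J ` (Pset J r \<times> Lset (K - J) s)) = card (Pset J r \<times> Lset (K - J) s)"
      using inj_mk J by (simp add: card_image)
    also have "\<dots> = card (Pset J r) * card (Lset (K - J) s)" by (rule card_cartesian_product)
    also have "\<dots> = (r choose card J) * ((s + card (K - J)) choose card (K - J))"
      using card_Pset[OF fJ] card_Lset[of "K - J" s] assms by simp
    finally show "card (mk J ` (Pset J r \<times> Lset (K - J) s)) = (r choose card J) * ((s + card (K - J)) choose card (K - J))" .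
  qed
  finally show ?thesis .
qed

lemma sum_Pow_card:
  assumes "finite K"
  shows "(\<Sum>J\<in>Pow K. g (card J)) = (\<Sum>j\<le>card K. (card K choose j) * (g j :: nat))"
proof -
  have "(\<Sum>J\<in>Pow K. g (card J)) = (\<Sum>j\<le>card K. \<Sum>J\<in>{J. J \<in> Pow K \<and> card J = j}. g (card J))"
    by (rule sum.group[symmetric]) (use assms in \<open>auto intro: card_mono\<close>)
  also have "\<dots> = (\<Sum>j\<le>card K. (card K choose j) * g j)"
  proof (rule sum.cong[OF refl])
    fix j
    have "(\<Sum>J\<in>{J. J \<in> Pow K \<and> card J = j}. g (card J)) = (\<Sum>J\<in>{J. J \<subseteq> K \<and> card J = j}. g j)"
      by (intro sum.cong) auto
    also have "\<dots> = card {J. J \<subseteq> K \<and> card J = j} * g j" by simp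
    also have "\<dots> = (card K choose j) * g j" using n_subsets[OF assms] by simp
    finally show "(\<Sum>J\<in>{J. J \<in> Pow K \<and> card J = j}. g (card J)) = (card K choose j) * g j" .
  qed
  finally show ?thesis .
qed

lemma card_Tset_beta:
  assumes "q \<ge> 1"
  shows "card (Tset {1..<q} ((h + 1) div 2) (h div 2)) = beta h q"
proof -
  let ?K = "{1..<q}" and ?r = "(h + 1) div 2" and ?s = "h div 2"
  have "card (Tset ?K ?r ?s) = (\<Sum>J\<in>Pow ?K. (?r choose card J) * ((?s + (card ?K - card J)) choose (card ?K - card J)))"
    unfolding card_Tset[OF finite_atLeastLessThan]
    by (intro sum.cong refl) (auto simp: card_Diff_subset finite_subset)
  also have "\<dots> = (\<Sum>j\<le>card ?K. (card ?K choose j) * ((?r choose j) * ((?s + (card ?K - j)) choose (card ?K - j))))"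
    by (rule sum_Pow_card[of ?K "\<lambda>j. (?r choose j) * ((?s + (card ?K - j)) choose (card ?K - j))"]) simp
  also have "\<dots> = beta h q" unfolding beta_def using assms by (simp add: mult.assoc)
  finally show ?thesis .
qed

lemma Tset_props:
  assumes "t \<in> Tset K r s" "finite K"
  shows "\<forall>i. i \<notin> K \<longrightarrow> t i = 0" "\<forall>i. t i \<ge> - int r"
    "(\<Sum>i\<in>K. max (t i) 0) \<le> int s" "(\<Sum>i\<in>K. max (- t i) 0) \<le> int r"
proof -
  obtain J a b where J: "J \<subseteq> K" and a: "a \<in> Pset J r" and b: "b \<in> Lset (K - J) s"
    and t: "t = mk J (a, b)" using assms(1) unfolding Tset_def by auto
  show "\<forall>i. i \<notin> K \<longrightarrow> t i = 0" using J a b t by (auto simp: mk_def Pset_def Lset_def)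
  show "\<forall>i. t i \<ge> - int r"
  proof
    fix i
    show "t i \<ge> - int r"
    proof (cases "i \<in> J")
      case True
      have "a i \<le> sum a J" using True J assms(2) finite_subset by (intro member_le_sum) auto
      also have "\<dots> \<le> r" using a by (auto simp: Pset_def)
      finally show ?thesis using t True by (simp add: mk_def)
    qed (use t in \<open>auto simp: mk_def\<close>)
  qed
  have p: "max (t i) 0 = int (b i)" for i using t b by (auto simp: mk_def Lset_def)
  have n: "max (- t i) 0 = int (a i)" for i using t a by (auto simp: mk_def Pset_def)
  have "sum b K = sum b (K - J)" using b assms(2) by (intro sum.mono_neutral_right) (auto simp: Lset_def)
  thus "(\<Sum>i\<in>K. max (t i) 0) \<le> int s" using b unfolding p by (simp add: Lset_def flip: of_nat_sum)
  have "sum a K = sum a J" using a assms(2) J by (intro sum.mono_neutral_right) (auto simp: Pset_def)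
  thus "(\<Sum>i\<in>K. max (- t i) 0) \<le> int r" using a unfolding n by (simp add: Pset_def flip: of_nat_sum)
qed


lemma lessThan_insert0: "q \<ge> 1 \<Longrightarrow> {..<q} = insert 0 {1..<(q::nat)}" by auto

lemma sum_split0: assumes "(q::nat) \<ge> 1" shows "(\<Sum>i<q. f i) = f 0 + (\<Sum>i\<in>{1..<q}. f i)"
proof -
  have "sum f {..<q} = sum f (insert 0 {1..<q})"
    by (rule arg_cong[where f="sum f"]) (use assms in auto)
  also have "\<dots> = f 0 + sum f {1..<q}" by (rule sum.insert) auto
  finally show ?thesis .
qed

lemma simplex_eq_image:
  assumes "q \<ge> 1"
  shows "simplex q n = (\<lambda>f. f(0 := n - sum f {1..<q})) ` Lset {1..<q} n"
proof (intro Set.set_eqI iffI)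
  fix x assume x: "x \<in> simplex q n"
  have s: "x 0 + sum x {1..<q} = n" using x sum_split0[OF assms, of x] by (simp add: simplex_def)
  have "sum (x(0:=0)) {1..<q} = sum x {1..<q}" by (intro sum.cong) auto
  hence m: "x(0:=0) \<in> Lset {1..<q} n" using x s by (auto simp: Lset_def simplex_def)
  have "x = (\<lambda>f. f(0 := n - sum f {1..<q})) (x(0:=0))"
    using s \<open>sum (x(0:=0)) {1..<q} = sum x {1..<q}\<close> by (auto simp: fun_eq_iff)
  from this m show "x \<in> (\<lambda>f. f(0 := n - sum f {1..<q})) ` Lset {1..<q} n" by (rule image_eqI)
next
  fix x assume "x \<in> (\<lambda>f. f(0 := n - sum f {1..<q})) ` Lset {1..<q} n"
  then obtain f where f: "f \<in> Lset {1..<q} n" "x = f(0 := n - sum f {1..<q})" by auto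
  have "sum x {1..<q} = sum f {1..<q}" using f by (intro sum.cong) auto
  moreover have "x 0 = n - sum f {1..<q}" using f by simp
  moreover have "sum f {1..<q} \<le> n" using f by (simp add: Lset_def)
  ultimately have "(\<Sum>i<q. x i) = n" using sum_split0[OF assms, of x] by simp
  moreover have "\<forall>i\<ge>q. x i = 0" using f assms by (auto simp: Lset_def)
  ultimately show "x \<in> simplex q n" by (simp add: simplex_def)
qed

lemma card_simplex:
  assumes "q \<ge> 1"
  shows "card (simplex q n) = (n + q - 1) choose (q - 1)"
proof -
  have inj: "inj_on (\<lambda>f. f(0 := n - sum f {1..<q})) (Lset {1..<q} n)"
  proof (rule inj_onI)
    fix f g assume "f \<in> Lset {1..<q} n" "g \<in> Lset {1..<q} n"
      "f(0 := n - sum f {1..<q}) = g(0 := n - sum g {1..<q})"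
    hence "f i = g i" for i by (cases "i = 0") (auto simp: Lset_def dest: fun_cong[where x=i])
    thus "f = g" by auto
  qed
  have "card (simplex q n) = card (Lset {1..<q} n)"
    using simplex_eq_image[OF assms] inj by (simp add: card_image)
  also have "\<dots> = (n + q - 1) choose (q - 1)" using card_Lset[of "{1..<q}" n] assms by simp
  finally show ?thesis .
qed

lemma finite_simplex: "q \<ge> 1 \<Longrightarrow> finite (simplex q n)"
  using simplex_eq_image finite_Lset by (metis finite_atLeastLessThan finite_imageI)

definition Interior :: "nat \<Rightarrow> nat \<Rightarrow> nat \<Rightarrow> (nat \<Rightarrow> nat) set" where
  "Interior q n r = {x \<in> simplex q n. \<forall>i<q. r \<le> x i}"

lemma card_Interior:
  assumes "q \<ge> 1"
  shows "card (Interior q n r) = (if q * r \<le> n then (n - q * r + q - 1) choose (q - 1) else 0)"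
proof (cases "q * r \<le> n")
  case True
  let ?e = "\<lambda>g i. if i < q then g i + r else (0::nat)"
  have img: "Interior q n r = ?e ` simplex q (n - q * r)"
  proof (intro Set.set_eqI iffI)
    fix x assume x: "x \<in> Interior q n r"
    let ?g = "\<lambda>i. x i - r"
    have "(\<Sum>i<q. x i) = (\<Sum>i<q. ?g i + r)" using x by (intro sum.cong) (auto simp: Interior_def)
    also have "\<dots> = (\<Sum>i<q. ?g i) + q * r" by (simp only: sum.distrib) simp
    finally have m: "?g \<in> simplex q (n - q * r)" using x by (auto simp: Interior_def simplex_def)
    have "x = ?e ?g" using x by (auto simp: Interior_def simplex_def fun_eq_iff)
    from this m show "x \<in> ?e ` simplex q (n - q * r)" by (rule image_eqI)
  next
    fix x assume "x \<in> ?e ` simplex q (n - q * r)"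
    then obtain g where g: "g \<in> simplex q (n - q * r)" "x = ?e g" by auto
    have "(\<Sum>i<q. x i) = (\<Sum>i<q. g i + r)" using g by (intro sum.cong) auto
    also have "\<dots> = (\<Sum>i<q. g i) + q * r" by (simp only: sum.distrib) simp
    finally show "x \<in> Interior q n r" using g True by (auto simp: Interior_def simplex_def)
  qed
  have inj: "inj_on ?e (simplex q (n - q * r))"
  proof (rule inj_onI)
    fix g g' assume g: "g \<in> simplex q (n - q * r)" "g' \<in> simplex q (n - q * r)" "?e g = ?e g'"
    hence "g i = g' i" for i
      by (cases "i < q") (auto simp: simplex_def dest: fun_cong[where x=i])
    thus "g = g'" by auto
  qed
  show ?thesis using img inj card_simplex[OF assms] True by (simp add: card_image)
next
  case False
  have "Interior q n r = {}"
  proof (rule ccontr)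
    assume "Interior q n r \<noteq> {}"
    then obtain x where x: "x \<in> Interior q n r" by auto
    have "q * r = (\<Sum>i<q. r)" by simp
    also have "\<dots> \<le> (\<Sum>i<q. x i)" using x by (intro sum_mono) (auto simp: Interior_def)
    also have "\<dots> = n" using x by (auto simp: Interior_def simplex_def)
    finally show False using False by simp
  qed
  thus ?thesis using False by simp
qed

lemma correction_sum:
  "(\<Sum>j = 1..t. real (ibinom (int n + int (Suc (Suc p)) - 1 - int j) p))
    = real ((n + Suc p) choose Suc p) - real (if t \<le> n then (n - t + Suc p) choose Suc p else 0)"
proof (induction t)
  case 0
  then show ?case by simp
next
  case (Suc t)
  have split: "(\<Sum>j = 1..Suc t. f j) = (\<Sum>j = 1..t. f j) + f (Suc t)" for f :: "nat \<Rightarrow> real"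
    by simp
  have tm: "ibinom (int n + int (Suc (Suc p)) - 1 - int (Suc t)) p
      = (if Suc t \<le> n + 1 then (n - t + p) choose p else 0)"
  proof (cases "Suc t \<le> n + 1")
    case True
    hence e: "int n + int (Suc (Suc p)) - 1 - int (Suc t) = int (n - t + p)" by simp
    show ?thesis unfolding ibinom_def e nat_int using True by simp
  next
    case False
    thus ?thesis by (simp add: ibinom_def)
  qed
  show ?case
  proof (cases "Suc t \<le> n")
    case True
    have "((n - t + Suc p) choose Suc p) = ((n - Suc t + Suc p) choose Suc p) + ((n - t + p) choose p)"
    proof -
      have a: "n - t + Suc p = Suc (n - t + p)" and b: "n - Suc t + Suc p = n - t + p" using True by simp_all
      show ?thesis unfolding a b binomial_Suc_Suc by (rule add.commute)
    qed
    thus ?thesis using Suc.IH True tm unfolding split by simp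
  next
    case False
    show ?thesis
    proof (cases "t = n")
      case True
      thus ?thesis using Suc.IH tm unfolding split by simp
    next
      case False
      thus ?thesis using Suc.IH tm \<open>\<not> Suc t \<le> n\<close> unfolding split by simp
    qed
  qed
qed


definition ext :: "nat \<Rightarrow> nat \<Rightarrow> nat \<Rightarrow> (nat \<Rightarrow> int) \<Rightarrow> nat \<Rightarrow> int" where
  "ext q r s t = t(0 := int s - int r - sum t {1..<q})"

definition Emap :: "nat \<Rightarrow> nat \<Rightarrow> nat \<Rightarrow> (nat \<Rightarrow> nat) \<Rightarrow> (nat \<Rightarrow> int) \<Rightarrow> nat \<Rightarrow> nat" where
  "Emap q r s x t = (\<lambda>i. nat (int (x i) + ext q r s t i))"

lemma sum_le_pos: "finite K \<Longrightarrow> sum (t::nat\<Rightarrow>int) K \<le> (\<Sum>i\<in>K. max (t i) 0)"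
  by (intro sum_mono) auto

lemma ext_nonneg:
  assumes x: "x \<in> Interior q n r" and t: "t \<in> Tset {1..<q} r s" and q: "q \<ge> 1"
  shows "int (x i) + ext q r s t i \<ge> 0"
proof -
  note tp = Tset_props[OF t finite_atLeastLessThan]
  show ?thesis
  proof (cases "i = 0")
    case True
    have "sum t {1..<q} \<le> int s" using sum_le_pos[of "{1..<q}" t] tp(3) by simp
    moreover have "x 0 \<ge> r" using x q by (auto simp: Interior_def)
    ultimately show ?thesis using True by (simp add: ext_def)
  next
    case False
    hence e: "ext q r s t i = t i" by (simp add: ext_def)
    show ?thesis
    proof (cases "i < q")
      case True
      hence "int (x i) \<ge> int r" using x by (auto simp: Interior_def)
      moreover have "t i \<ge> - int r" using tp(2) by blast
      ultimately show ?thesis using e by linarith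
    next
      case False
      thus ?thesis using tp(1) e by simp
    qed
  qed
qed

lemma Emap_mem:
  assumes x: "x \<in> Interior q n r" and t: "t \<in> Tset {1..<q} r s" and q: "q \<ge> 1" and sr: "s \<le> r"
  shows "Emap q r s x t \<in> simplex q (n + s - r)"
proof -
  note tp = Tset_props[OF t finite_atLeastLessThan]
  have xs: "x \<in> simplex q n" using x by (simp add: Interior_def)
  have nr: "n \<ge> r"
  proof -
    have "r \<le> x 0" using x q by (auto simp: Interior_def)
    also have "x 0 \<le> (\<Sum>i<q. x i)" using q by (intro member_le_sum) auto
    finally show ?thesis using xs by (simp add: simplex_def)
  qed
  have z: "\<forall>i\<ge>q. Emap q r s x t i = 0"
    using xs tp(1) q by (auto simp: Emap_def ext_def simplex_def)
  have "int (\<Sum>i<q. Emap q r s x t i) = (\<Sum>i<q. int (x i) + ext q r s t i)"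
    unfolding of_nat_sum Emap_def using ext_nonneg[OF x t q] by (intro sum.cong) auto
  also have "\<dots> = (\<Sum>i<q. int (x i)) + (\<Sum>i<q. ext q r s t i)" by (rule sum.distrib)
  also have "(\<Sum>i<q. ext q r s t i) = ext q r s t 0 + (\<Sum>i\<in>{1..<q}. ext q r s t i)"
    by (rule sum_split0[OF q])
  also have "(\<Sum>i\<in>{1..<q}. ext q r s t i) = sum t {1..<q}" by (intro sum.cong) (auto simp: ext_def)
  also have "(\<Sum>i<q. int (x i)) = int n" using xs by (simp add: simplex_def flip: of_nat_sum)
  finally have "int (\<Sum>i<q. Emap q r s x t i) = int (n + s - r)" using nr sr by (simp add: ext_def)
  hence "(\<Sum>i<q. Emap q r s x t i) = n + s - r" by (rule of_nat_eq_iff[THEN iffD1])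
  thus ?thesis using z by (simp add: simplex_def)
qed

lemma Emap_inj:
  assumes x: "x \<in> Interior q n r" and q: "q \<ge> 1"
  shows "inj_on (Emap q r s x) (Tset {1..<q} r s)"
proof (rule inj_onI)
  fix t t' assume t: "t \<in> Tset {1..<q} r s" and t': "t' \<in> Tset {1..<q} r s"
    and e: "Emap q r s x t = Emap q r s x t'"
  have "t i = t' i" for i
  proof (cases "i \<in> {1..<q}")
    case True
    have "Emap q r s x t i = Emap q r s x t' i" using e by simp
    hence "nat (int (x i) + ext q r s t i) = nat (int (x i) + ext q r s t' i)"
      unfolding Emap_def .
    hence "int (x i) + ext q r s t i = int (x i) + ext q r s t' i"
      using ext_nonneg[OF x t q, of i] ext_nonneg[OF x t' q, of i] by simp
    thus ?thesis using True by (simp add: ext_def)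
  next
    case False
    thus ?thesis using Tset_props(1)[OF t finite_atLeastLessThan] Tset_props(1)[OF t' finite_atLeastLessThan]
      by simp
  qed
  thus "t = t'" by auto
qed

lemma abs_sum_bound:
  fixes e :: "nat \<Rightarrow> int"
  assumes "(\<Sum>i\<in>K. max (e i) 0) \<le> B" "(\<Sum>i\<in>K. max (- e i) 0) \<le> B"
  shows "\<bar>sum e K\<bar> + (\<Sum>i\<in>K. \<bar>e i\<bar>) \<le> 2 * B"
proof -
  have "(\<Sum>i\<in>K. \<bar>e i\<bar>) = (\<Sum>i\<in>K. max (e i) 0 + max (- e i) 0)"
    by (intro sum.cong) auto
  hence a: "(\<Sum>i\<in>K. \<bar>e i\<bar>) = (\<Sum>i\<in>K. max (e i) 0) + (\<Sum>i\<in>K. max (- e i) 0)"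
    by (simp only: sum.distrib)
  have "sum e K = (\<Sum>i\<in>K. max (e i) 0 - max (- e i) 0)"
    by (intro sum.cong) auto
  hence b: "sum e K = (\<Sum>i\<in>K. max (e i) 0) - (\<Sum>i\<in>K. max (- e i) 0)"
    by (simp only: sum_subtractf)
  show ?thesis using a b assms by linarith
qed

lemma max_diff_le: "max ((a::int) - b) 0 \<le> max a 0 + max (- b) 0" by simp

lemma Emap_disj:
  assumes x: "x \<in> Interior q n r" and y: "y \<in> Interior q n r"
    and t: "t \<in> Tset {1..<q} r s" and t': "t' \<in> Tset {1..<q} r s" and q: "q \<ge> 1"
    and e: "Emap q r s x t = Emap q r s y t'"
  shows "(\<Sum>i<q. \<bar>int (x i) - int (y i)\<bar>) \<le> 2 * int (r + s)"
proof -
  let ?K = "{1..<q}"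
  define d where "d i = t' i - t i" for i
  have eq: "int (x i) - int (y i) = ext q r s t' i - ext q r s t i" for i
  proof -
    have "Emap q r s x t i = Emap q r s y t' i" using e by simp
    hence "nat (int (x i) + ext q r s t i) = nat (int (y i) + ext q r s t' i)"
      unfolding Emap_def .
    hence "int (x i) + ext q r s t i = int (y i) + ext q r s t' i"
      using ext_nonneg[OF x t q, of i] ext_nonneg[OF y t' q, of i] by simp
    thus ?thesis by simp
  qed
  have "(\<Sum>i<q. \<bar>int (x i) - int (y i)\<bar>) = \<bar>int (x 0) - int (y 0)\<bar> + (\<Sum>i\<in>?K. \<bar>int (x i) - int (y i)\<bar>)"
    by (rule sum_split0[OF q])
  also have "(\<Sum>i\<in>?K. \<bar>int (x i) - int (y i)\<bar>) = (\<Sum>i\<in>?K. \<bar>d i\<bar>)"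
    by (intro sum.cong) (auto simp: eq d_def ext_def)
  also have "int (x 0) - int (y 0) = - sum d ?K"
    unfolding eq by (simp add: ext_def d_def sum_subtractf)
  finally have 1: "(\<Sum>i<q. \<bar>int (x i) - int (y i)\<bar>) = \<bar>sum d ?K\<bar> + (\<Sum>i\<in>?K. \<bar>d i\<bar>)" by simp
  note tp = Tset_props[OF t finite_atLeastLessThan] and tp' = Tset_props[OF t' finite_atLeastLessThan]
  have P1: "(\<Sum>i\<in>?K. max (d i) 0) \<le> (\<Sum>i\<in>?K. max (t' i) 0 + max (- t i) 0)"
    unfolding d_def by (intro sum_mono max_diff_le)
  have P2: "(\<Sum>i\<in>?K. max (t' i) 0 + max (- t i) 0) \<le> int (r + s)" using tp(4) tp'(3) by (simp add: sum.distrib)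
  have P: "(\<Sum>i\<in>?K. max (d i) 0) \<le> int (r + s)" using P1 P2 by linarith
  have N1: "(\<Sum>i\<in>?K. max (- d i) 0) \<le> (\<Sum>i\<in>?K. max (t i) 0 + max (- t' i) 0)"
    unfolding d_def
  proof (intro sum_mono)
    fix i show "max (- (t' i - t i)) 0 \<le> max (t i) 0 + max (- t' i) 0"
      using max_diff_le[of "t i" "t' i"] by simp
  qed
  have N2: "(\<Sum>i\<in>?K. max (t i) 0 + max (- t' i) 0) \<le> int (r + s)" using tp(3) tp'(4) by (simp add: sum.distrib)
  have N: "(\<Sum>i\<in>?K. max (- d i) 0) \<le> int (r + s)" using N1 N2 by linarith
  show ?thesis unfolding 1 by (rule abs_sum_bound[OF P N])
qed


context comm_group begin

lemma P_add:
  assumes b: "\<forall>i<q. b i \<in> carrier G"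
  shows "finprod G (\<lambda>i. b i [^] (f i + g i)) {..<q}
       = finprod G (\<lambda>i. b i [^] (f i :: nat)) {..<q} \<otimes> finprod G (\<lambda>i. b i [^] (g i :: nat)) {..<q}"
proof -
  have "finprod G (\<lambda>i. b i [^] (f i + g i)) {..<q} = finprod G (\<lambda>i. b i [^] f i \<otimes> b i [^] g i) {..<q}"
    using b by (intro finprod_cong') (auto simp: nat_pow_mult)
  also have "\<dots> = finprod G (\<lambda>i. b i [^] (f i :: nat)) {..<q} \<otimes> finprod G (\<lambda>i. b i [^] (g i :: nat)) {..<q}"
    using b by (intro finprod_multf) auto
  finally show ?thesis .
qed

lemma P_closed:
  assumes b: "\<forall>i<q. b i \<in> carrier G"
  shows "finprod G (\<lambda>i. b i [^] (f i :: nat)) {..<q} \<in> carrier G"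
  using b by (intro finprod_closed) auto

lemma Bh_collision:
  assumes B: "Bh_set G h q b" and q: "q \<ge> 1"
    and x: "x \<in> simplex q n" and y: "y \<in> simplex q n" and ne: "x \<noteq> y"
    and eq: "finprod G (\<lambda>i. b i [^] x i) {..<q} = finprod G (\<lambda>i. b i [^] y i) {..<q}"
  shows "d1 q x y > real h"
proof (rule ccontr)
  assume le: "\<not> d1 q x y > real h"
  have b: "\<forall>i<q. b i \<in> carrier G" using B by (simp add: Bh_set_def)
  define m where "m i = min (x i) (y i)" for i
  define u where "u i = x i - m i" for i
  define v where "v i = y i - m i" for i
  have xu: "x = (\<lambda>i. m i + u i)" and yv: "y = (\<lambda>i. m i + v i)" by (auto simp: m_def u_def v_def)
  let ?P = "\<lambda>f. finprod G (\<lambda>i. b i [^] (f i :: nat)) {..<q}"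
  have "?P m \<otimes> ?P u = ?P m \<otimes> ?P v"
    using eq P_add[OF b, of m u] P_add[OF b, of m v] xu yv by simp
  hence Puv: "?P u = ?P v" using P_closed[OF b] Units_eq by simp
  have "sum m {..<q} + sum u {..<q} = n" "sum m {..<q} + sum v {..<q} = n"
    using x y by (simp_all add: simplex_def xu yv sum.distrib)
  hence suv: "sum u {..<q} = sum v {..<q}" by simp
  have "\<bar>real (x i) - real (y i)\<bar> = real (u i) + real (v i)" for i
    by (cases "x i \<le> y i") (auto simp: m_def u_def v_def)
  hence "d1 q x y = (real (sum u {..<q}) + real (sum v {..<q})) / 2"
    by (simp add: d1_def sum.distrib)
  hence d: "d1 q x y = real (sum u {..<q})" using suv by simp
  let ?d = "sum u {..<q}"
  have "real ?d \<le> real h" using le d by linarith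
  hence dh: "?d \<le> h" by (simp only: of_nat_le_iff)
  define w where "w i = (if i = 0 then h - ?d else 0)" for i :: nat
  let ?u = "\<lambda>i. u i + w i" and ?v = "\<lambda>i. v i + w i"
  have sw: "sum w {..<q} = h - ?d" using q by (simp add: w_def)
  have uq: "\<forall>i\<ge>q. u i = 0 \<and> v i = 0 \<and> w i = 0" using x y q by (auto simp: simplex_def u_def v_def w_def)
  have inj: "\<forall>x\<in>simplex q h. \<forall>y\<in>simplex q h. ?P x = ?P y \<longrightarrow> x = y"
    using B unfolding Bh_set_def inj_on_def by blast
  have m1: "?u \<in> simplex q h" using uq sw dh by (simp add: simplex_def sum.distrib)
  have m2: "?v \<in> simplex q h" using uq sw dh suv by (simp add: simplex_def sum.distrib)
  have m3: "?P ?u = ?P ?v" using Puv P_add[OF b, of u w] P_add[OF b, of v w] by simp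
  have m4: "?u \<noteq> ?v"
  proof
    assume "?u = ?v"
    hence "u = v" by (auto simp: fun_eq_iff dest: fun_cong)
    thus False using ne xu yv by simp
  qed
  show False using inj[rule_format, OF m1 m2] m3 m4 by simp
qed

lemma pigeonhole_code:
  assumes B: "Bh_set G h q b" and q: "q \<ge> 1" and fin: "finite (carrier G)"
  shows "\<exists>C. C \<subseteq> simplex q n \<and> (\<forall>x\<in>C. \<forall>y\<in>C. x \<noteq> y \<longrightarrow> d1 q x y > real h)
            \<and> card (simplex q n) \<le> card C * card (carrier G)"
proof -
  have b: "\<forall>i<q. b i \<in> carrier G" using B by (simp add: Bh_set_def)
  let ?P = "\<lambda>f. finprod G (\<lambda>i. b i [^] (f i :: nat)) {..<q}"
  let ?S = "simplex q n"
  define fib where "fib g = {x \<in> ?S. ?P x = g}" for g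
  have finS: "finite ?S" by (rule finite_simplex[OF q])
  have "(\<Sum>g\<in>carrier G. card (fib g)) = card ?S"
  proof -
    have "(\<Sum>g\<in>carrier G. \<Sum>x\<in>{x \<in> ?S. ?P x = g}. (1::nat)) = (\<Sum>x\<in>?S. 1)"
      by (rule sum.group) (use finS fin P_closed[OF b] in auto)
    thus ?thesis by (simp add: fib_def)
  qed
  moreover have "carrier G \<noteq> {}" by auto
  ultimately obtain g where g: "g \<in> carrier G" and big: "card ?S \<le> card (fib g) * card (carrier G)"
  proof -
    assume r: "\<And>g. g \<in> carrier G \<Longrightarrow> card ?S \<le> card (fib g) * card (carrier G) \<Longrightarrow> thesis"
    show thesis
    proof (rule ccontr)
      assume "\<not> thesis"
      hence lt: "\<forall>g\<in>carrier G. card (fib g) * card (carrier G) < card ?S" using r by force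
      have "card ?S * card (carrier G) = (\<Sum>g\<in>carrier G. card (fib g) * card (carrier G))"
        by (simp only: sum_distrib_right[symmetric] \<open>(\<Sum>g\<in>carrier G. card (fib g)) = card ?S\<close>)
      also have "\<dots> < (\<Sum>g\<in>carrier G. card ?S)"
        using lt fin \<open>carrier G \<noteq> {}\<close> by (intro sum_strict_mono) auto
      also have "\<dots> = card ?S * card (carrier G)" by simp
      finally show False by simp
    qed
  qed
  have "\<forall>x\<in>fib g. \<forall>y\<in>fib g. x \<noteq> y \<longrightarrow> d1 q x y > real h"
    using Bh_collision[OF B q] by (auto simp: fib_def)
  moreover have "fib g \<subseteq> ?S" by (auto simp: fib_def)
  ultimately show ?thesis using big by blast
qed

end


definition ZG :: "nat \<Rightarrow> nat monoid" where
  "ZG m = \<lparr>carrier = {..<m}, monoid.mult = (\<lambda>a b. (a + b) mod m), one = 0\<rparr>"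

lemma ZG_simps [simp]: "carrier (ZG m) = {..<m}" "a \<otimes>\<^bsub>ZG m\<^esub> b = (a + b) mod m" "\<one>\<^bsub>ZG m\<^esub> = 0"
  by (simp_all add: ZG_def)

lemma ZG_comm_group: assumes "m > 0" shows "comm_group (ZG m)"
proof (rule comm_groupI)
  fix x y z assume "x \<in> carrier (ZG m)" "y \<in> carrier (ZG m)" "z \<in> carrier (ZG m)"
  show "x \<otimes>\<^bsub>ZG m\<^esub> y \<otimes>\<^bsub>ZG m\<^esub> z = x \<otimes>\<^bsub>ZG m\<^esub> (y \<otimes>\<^bsub>ZG m\<^esub> z)"
    by (simp add: mod_add_left_eq mod_add_right_eq add.assoc)
next
  fix x y assume "x \<in> carrier (ZG m)" "y \<in> carrier (ZG m)"
  show "x \<otimes>\<^bsub>ZG m\<^esub> y \<in> carrier (ZG m)" using assms by simp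
  show "x \<otimes>\<^bsub>ZG m\<^esub> y = y \<otimes>\<^bsub>ZG m\<^esub> x" by (simp add: add.commute)
next
  show "\<one>\<^bsub>ZG m\<^esub> \<in> carrier (ZG m)" using assms by simp
next
  fix x assume x: "x \<in> carrier (ZG m)"
  show "\<one>\<^bsub>ZG m\<^esub> \<otimes>\<^bsub>ZG m\<^esub> x = x" using x by simp
  show "\<exists>y\<in>carrier (ZG m). y \<otimes>\<^bsub>ZG m\<^esub> x = \<one>\<^bsub>ZG m\<^esub>"
  proof (intro bexI)
    show "(m - x) mod m \<otimes>\<^bsub>ZG m\<^esub> x = \<one>\<^bsub>ZG m\<^esub>" using x by (simp add: mod_add_left_eq)
    show "(m - x) mod m \<in> carrier (ZG m)" using assms by simp
  qed
qed

lemma ZG_pow: assumes "m > 0" shows "a [^]\<^bsub>ZG m\<^esub> (k::nat) = (k * a) mod m"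
  by (induction k) (simp_all add: mod_add_left_eq mod_add_right_eq add.commute)

lemma ZG_finprod:
  assumes m: "m > 0" and b: "\<forall>i<(q::nat). b i < m"
  shows "finprod (ZG m) (\<lambda>i. b i [^]\<^bsub>ZG m\<^esub> (x i :: nat)) {..<q} = (\<Sum>i<q. x i * b i) mod m"
  using b
proof (induction q)
  case 0
  interpret comm_group "ZG m" by (rule ZG_comm_group[OF m])
  show ?case by simp
next
  case (Suc q)
  interpret comm_group "ZG m" by (rule ZG_comm_group[OF m])
  have "finprod (ZG m) (\<lambda>i. b i [^]\<^bsub>ZG m\<^esub> (x i :: nat)) (insert q {..<q})
      = b q [^]\<^bsub>ZG m\<^esub> x q \<otimes>\<^bsub>ZG m\<^esub> finprod (ZG m) (\<lambda>i. b i [^]\<^bsub>ZG m\<^esub> (x i :: nat)) {..<q}"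
  proof (rule finprod_insert)
    show "(\<lambda>i. b i [^]\<^bsub>ZG m\<^esub> (x i :: nat)) \<in> {..<q} \<rightarrow> carrier (ZG m)"
      using Suc.prems m by (intro Pi_I) (simp add: ZG_pow[OF m])
    show "b q [^]\<^bsub>ZG m\<^esub> (x q :: nat) \<in> carrier (ZG m)" using Suc.prems m by (simp add: ZG_pow[OF m])
  qed auto
  also have "\<dots> = (x q * b q + (\<Sum>i<q. x i * b i)) mod m"
    using Suc by (simp add: ZG_pow[OF m] mod_add_left_eq mod_add_right_eq)
  finally show ?case by (simp add: lessThan_Suc add.commute)
qed

lemma digits_bound:
  assumes "B > 0" "\<forall>i<(q::nat). x i < (B::nat)"
  shows "(\<Sum>i<q. x i * B ^ i) < B ^ q"
  using assms(2)
proof (induction q)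
  case 0 thus ?case by simp
next
  case (Suc q)
  have "(\<Sum>i<Suc q. x i * B ^ i) = (\<Sum>i<q. x i * B ^ i) + x q * B ^ q" by simp
  also have "\<dots> < B ^ q + x q * B ^ q" using Suc by simp
  also have "\<dots> \<le> B ^ q + (B - 1) * B ^ q"
  proof -
    have "x q < B" using Suc.prems by simp
    hence "x q \<le> B - 1" by simp
    thus ?thesis by (simp add: mult_right_mono)
  qed
  also have "\<dots> = B ^ Suc q" using assms(1) by (cases B) (auto simp: algebra_simps)
  finally show ?case .
qed

lemma digits_unique:
  assumes "B > 0" "\<forall>i<(q::nat). x i < (B::nat)" "\<forall>i<q. y i < B"
    "(\<Sum>i<q. x i * B ^ i) = (\<Sum>i<q. y i * B ^ i)"
  shows "\<forall>i<q. x i = y i"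
  using assms(2-4)
proof (induction q)
  case 0 thus ?case by simp
next
  case (Suc q)
  let ?X = "\<Sum>i<q. x i * B ^ i" and ?Y = "\<Sum>i<q. y i * B ^ i"
  have X: "?X < B ^ q" and Y: "?Y < B ^ q" using digits_bound[OF assms(1)] Suc.prems by auto
  have e: "?X + x q * B ^ q = ?Y + y q * B ^ q" using Suc.prems by simp
  have pos: "B ^ q > 0" using assms(1) by simp
  have "(?X + x q * B ^ q) div B ^ q = x q" using X pos by simp
  moreover have "(?Y + y q * B ^ q) div B ^ q = y q" using Y pos by simp
  ultimately have xq: "x q = y q" using e by simp
  have "(?X + x q * B ^ q) mod B ^ q = ?X" using X by simp
  moreover have "(?Y + y q * B ^ q) mod B ^ q = ?Y" using Y by simp
  ultimately have XY: "?X = ?Y" using e by simp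
  have "\<forall>i<q. x i < B" "\<forall>i<q. y i < B" using Suc.prems by auto
  hence "\<forall>i<q. x i = y i" using Suc.IH XY by blast
  thus ?case using xq less_Suc_eq by auto
qed

lemma Bh_exists:
  assumes h: "h \<ge> 1" and q: "q \<ge> 1"
  shows "\<exists>(G::nat monoid) b. comm_group G \<and> finite (carrier G) \<and> card (carrier G) = (h + 1) ^ q \<and> Bh_set G h q b"
proof -
  let ?B = "h + 1" let ?m = "?B ^ q"
  have m: "?m > 0" by simp
  define b where "b i = ?B ^ i" for i
  have bm: "\<forall>i<q. b i < ?m" using h by (auto simp: b_def intro: power_strict_increasing)
  have "Bh_set (ZG ?m) h q b"
    unfolding Bh_set_def
  proof (intro conjI)
    show "\<forall>i<q. b i \<in> carrier (ZG ?m)" using bm by simp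
    show "inj_on b {..<q}" using h by (auto simp: b_def inj_on_def power_inject_exp)
    show "inj_on (\<lambda>x. finprod (ZG ?m) (\<lambda>i. b i [^]\<^bsub>ZG ?m\<^esub> x i) {..<q}) (simplex q h)"
    proof (rule inj_onI)
      fix x y assume x: "x \<in> simplex q h" and y: "y \<in> simplex q h"
        and e: "finprod (ZG ?m) (\<lambda>i. b i [^]\<^bsub>ZG ?m\<^esub> x i) {..<q} = finprod (ZG ?m) (\<lambda>i. b i [^]\<^bsub>ZG ?m\<^esub> y i) {..<q}"
      have xb: "\<forall>i<q. x i < ?B"
      proof (intro allI impI)
        fix i assume "i < q"
        hence "x i \<le> (\<Sum>i<q. x i)" by (intro member_le_sum) auto
        thus "x i < ?B" using x by (simp add: simplex_def)
      qed
      have yb: "\<forall>i<q. y i < ?B"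
      proof (intro allI impI)
        fix i assume "i < q"
        hence "y i \<le> (\<Sum>i<q. y i)" by (intro member_le_sum) auto
        thus "y i < ?B" using y by (simp add: simplex_def)
      qed
      have "(\<Sum>i<q. x i * b i) mod ?m = (\<Sum>i<q. y i * b i) mod ?m"
        using e ZG_finprod[OF m bm] by simp
      moreover have "(\<Sum>i<q. x i * b i) < ?m" "(\<Sum>i<q. y i * b i) < ?m"
        using digits_bound[of ?B q x] digits_bound[of ?B q y] xb yb by (simp_all add: b_def)
      ultimately have "(\<Sum>i<q. x i * ?B ^ i) = (\<Sum>i<q. y i * ?B ^ i)" by (simp add: b_def)
      hence "\<forall>i<q. x i = y i" using digits_unique[of ?B q x y] xb yb by simp
      hence xy: "\<forall>i<q. x i = y i" .
      show "x = y"
      proof (rule ext)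
        fix i show "x i = y i"
          using xy x y by (cases "i < q") (auto simp: simplex_def)
      qed
    qed
  qed
  moreover have "comm_group (ZG ?m)" by (rule ZG_comm_group[OF m])
  ultimately show ?thesis by (intro exI[of _ "ZG ?m"] exI[of _ b]) simp
qed


lemma beta_pos: "beta h q \<ge> 1"
proof -
  have "1 \<le> ((q - 1) choose 0) * (((h + 1) div 2) choose 0) * ((h div 2 + (q - 1 - 0)) choose (q - 1 - 0))"
    by (simp add: Suc_le_eq zero_less_binomial_iff)
  also have "\<dots> \<le> beta h q" unfolding beta_def by (rule member_le_sum) auto
  finally show ?thesis .
qed

theorem mainTheorem15:
  fixes q n h :: nat
  assumes "q \<ge> 2" and "h \<ge> 1" and "n > h"
  shows "real (M q n h) \<ge> real ((n + q - 1) choose (q - 1)) / real (phi h q) \<and>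
         real (M q n h) \<le> real ((n + q - 1) choose (q - 1)) / real (beta h q)
           + (\<Sum>j = 1..q * ((h + 1) div 2). real (ibinom (int n + int q - 1 - int j) (q - 2)))"
proof -
  have q1: "q \<ge> 1" using assms(1) by simp
  let ?N = "(n + q - 1) choose (q - 1)"
  let ?good = "\<lambda>C. C \<subseteq> simplex q n \<and> (\<forall>x\<in>C. \<forall>y\<in>C. x \<noteq> y \<longrightarrow> d1 q x y > real h)"
  let ?S = "{card C | C. ?good C}"
  have Meq: "M q n h = Max ?S" by (simp add: M_def)
  have cardS: "card (simplex q n) = ?N" by (rule card_simplex[OF q1])
  have finS: "finite (simplex q n)" by (rule finite_simplex[OF q1])
  have fin: "finite ?S"
  proof (rule finite_subset[of _ "{..?N}"])
    show "?S \<subseteq> {..?N}" using card_mono[OF finS] cardS by auto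
  qed simp
  have ne: "?S \<noteq> {}" by (auto intro!: exI[of _ "{}"])
  have lower: "real ?N / real (phi h q) \<le> real (M q n h)"
  proof -
    have ex: "\<exists>m. \<exists>(G::nat monoid) b. comm_group G \<and> finite (carrier G) \<and> card (carrier G) = m \<and> Bh_set G h q b"
      using Bh_exists[OF assms(2) q1] by blast
    obtain G :: "nat monoid" and b where G: "comm_group G" "finite (carrier G)"
      "card (carrier G) = phi h q" "Bh_set G h q b"
      using LeastI_ex[OF ex] unfolding phi_def by blast
    obtain C where C: "?good C" and big: "card (simplex q n) \<le> card C * card (carrier G)"
      using comm_group.pigeonhole_code[OF G(1) G(4) q1 G(2), of n] by blast
    have "card C \<in> ?S" using C by blast
    hence "card C \<le> M q n h" unfolding Meq by (rule Max_ge[OF fin])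
    moreover have pos: "card (carrier G) > 0"
      using G(2) comm_group.axioms(2)[OF G(1)] monoid.one_closed[OF group.is_monoid]
      by (metis card_gt_0_iff empty_iff)
    ultimately have "?N \<le> M q n h * phi h q" using big cardS G(3)
      by (metis le_trans mult_le_mono1)
    hence "real ?N \<le> real (M q n h) * real (phi h q)" by (metis of_nat_le_iff of_nat_mult)
    thus ?thesis using pos G(3) by (simp add: divide_le_eq)
  qed
  have upper: "real (M q n h) \<le> real ?N / real (beta h q)
           + (\<Sum>j = 1..q * ((h + 1) div 2). real (ibinom (int n + int q - 1 - int j) (q - 2)))"
  proof -
    let ?r = "(h + 1) div 2" and ?s = "h div 2"
    let ?T = "Tset {1..<q} ?r ?s"
    have rs: "?r + ?s = h" "?s \<le> ?r" by auto
    have "M q n h \<in> ?S" unfolding Meq using fin ne by (rule Max_in)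
    then obtain C where C: "?good C" and MC: "M q n h = card C" by auto
    have finC: "finite C" using C finS finite_subset by blast
    let ?I = "Interior q n ?r"
    have Isub: "?I \<subseteq> simplex q n" by (auto simp: Interior_def)
    have c1: "card C = card (C \<inter> ?I) + card (C - ?I)" using finC by (rule card_Int_Diff)
    have c2: "card (C - ?I) \<le> ?N - card ?I"
    proof -
      have "card (C - ?I) \<le> card (simplex q n - ?I)" using C finS by (intro card_mono) auto
      also have "\<dots> = ?N - card ?I" using Isub finS cardS by (simp add: card_Diff_subset finite_subset)
      finally show ?thesis .
    qed
    have c3: "card (C \<inter> ?I) * beta h q \<le> ?N"
    proof -
      let ?U = "\<Union>x\<in>C \<inter> ?I. Emap q ?r ?s x ` ?T"
      have finT: "finite ?T"
        using card_Tset_beta[OF q1, of h] beta_pos[of h q] by (metis card.infinite not_one_le_zero)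
      have "card ?U = (\<Sum>x\<in>C \<inter> ?I. card (Emap q ?r ?s x ` ?T))"
      proof (rule card_UN_disjoint)
        show "finite (C \<inter> ?I)" using finC by simp
        show "\<forall>x\<in>C \<inter> ?I. finite (Emap q ?r ?s x ` ?T)" using finT by simp
        show "\<forall>x\<in>C \<inter> ?I. \<forall>y\<in>C \<inter> ?I. x \<noteq> y \<longrightarrow> Emap q ?r ?s x ` ?T \<inter> Emap q ?r ?s y ` ?T = {}"
        proof (intro ballI impI)
          fix x y assume x: "x \<in> C \<inter> ?I" and y: "y \<in> C \<inter> ?I" and xy: "x \<noteq> y"
          show "Emap q ?r ?s x ` ?T \<inter> Emap q ?r ?s y ` ?T = {}"
          proof (rule ccontr)
            assume "\<not> ?thesis"
            then obtain t t' where t: "t \<in> ?T" and t': "t' \<in> ?T"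
              and e: "Emap q ?r ?s x t = Emap q ?r ?s y t'" by blast
            have bd: "(\<Sum>i<q. \<bar>int (x i) - int (y i)\<bar>) \<le> 2 * int (?r + ?s)"
              using Emap_disj[of x q n ?r y t ?s t'] x y t t' q1 e by blast
            have "d1 q x y = real_of_int (\<Sum>i<q. \<bar>int (x i) - int (y i)\<bar>) / 2"
              by (simp add: d1_def of_int_sum)
            also have "\<dots> \<le> real_of_int (2 * int (?r + ?s)) / 2"
            proof (rule divide_right_mono)
              show "real_of_int (\<Sum>i<q. \<bar>int (x i) - int (y i)\<bar>) \<le> real_of_int (2 * int (?r + ?s))"
                using bd by (simp only: of_int_le_iff)
            qed simp
            also have "\<dots> = real h" using rs by simp
            finally have "d1 q x y \<le> real h" .
            moreover have "d1 q x y > real h" using C x y xy by blast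
            ultimately show False by simp
          qed
        qed
      qed
      also have "\<dots> = (\<Sum>x\<in>C \<inter> ?I. beta h q)"
      proof (rule sum.cong[OF refl])
        fix x assume "x \<in> C \<inter> ?I"
        hence "card (Emap q ?r ?s x ` ?T) = card ?T" using Emap_inj[OF _ q1] by (intro card_image) blast
        thus "card (Emap q ?r ?s x ` ?T) = beta h q" using card_Tset_beta[OF q1] by simp
      qed
      also have "\<dots> = card (C \<inter> ?I) * beta h q" by simp
      finally have cU: "card ?U = card (C \<inter> ?I) * beta h q" .
      have "?U \<subseteq> simplex q (n + ?s - ?r)" using Emap_mem[OF _ _ q1 rs(2)] by blast
      hence "card ?U \<le> card (simplex q (n + ?s - ?r))" using finite_simplex[OF q1] by (rule card_mono[rotated])
      also have "\<dots> = (n + ?s - ?r + q - 1) choose (q - 1)" by (rule card_simplex[OF q1])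
      also have "\<dots> \<le> ?N" using rs by (intro binomial_right_mono) simp
      finally show ?thesis using cU by simp
    qed
    have c4: "real (card (C \<inter> ?I)) \<le> real ?N / real (beta h q)"
      using c3 beta_pos[of h q] by (simp add: le_divide_eq flip: of_nat_mult)
    obtain p where p: "q = Suc (Suc p)" using assms(1) by (metis add_2_eq_Suc le_Suc_ex)
    have corr: "(\<Sum>j = 1..q * ?r. real (ibinom (int n + int q - 1 - int j) (q - 2))) = real (?N - card ?I)"
    proof -
      have "(\<Sum>j = 1..q * ?r. real (ibinom (int n + int q - 1 - int j) (q - 2)))
          = real ((n + Suc p) choose Suc p) - real (if q * ?r \<le> n then (n - q * ?r + Suc p) choose Suc p else 0)"
        using correction_sum[of n p "q * ?r"] p by simp
      also have "\<dots> = real ?N - real (card ?I)" using card_Interior[OF q1, of n ?r] p by simp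
      also have "\<dots> = real (?N - card ?I)" using card_mono[OF finS Isub] cardS by (simp add: of_nat_diff)
      finally show ?thesis .
    qed
    have "real (M q n h) = real (card (C \<inter> ?I)) + real (card (C - ?I))" using MC c1 by simp
    also have "\<dots> \<le> real ?N / real (beta h q) + real (?N - card ?I)" using c4 c2 by (simp only: add_mono of_nat_le_iff)
    finally show ?thesis using corr by simp
  qed
  show ?thesis using lower upper by simp
qed


end
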